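(* For every metrizable space $X$, the set $AM(X)$ of bounded admissible metrics on $X$ is dense in the space $PM(X)$ of continuous bounded pseudometrics on $X$, where $PM(X)$ carries the topology of uniform convergence (induced by the sup-metric $D(f,g) = \sup_{(x,y) \in X^2}|f(x,y) - g(x,y)|$).
   Context: A pseudometric on $X$ is continuous if it is continuous as a function $X^2 \to \mathbb{R}$; a metric on $X$ is admissible if it induces the topology of $X$. Both $PM(X)$ and $AM(X)$ are regarded as subspaces of the space $C(X^2)$ of continuous bounded real-valued functions on $X^2$ with the uniform convergence topology. *)

theory Defs
  imports "HOL-Analysis.Analysis"
begin

definition pseudometric_on :: "'a set \<Rightarrow> ('a \<Rightarrow> 'a \<Rightarrow> real) \<Rightarrow> bool" where
  "pseudometric_on M d \<longleftrightarrow>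
     (\<forall>x\<in>M. d x x = 0) \<and>
     (\<forall>x\<in>M. \<forall>y\<in>M. 0 \<le> d x y) \<and>
     (\<forall>x\<in>M. \<forall>y\<in>M. d x y = d y x) \<and>
     (\<forall>x\<in>M. \<forall>y\<in>M. \<forall>z\<in>M. d x z \<le> d x y + d y z)"

definition bounded_on2 :: "'a set \<Rightarrow> ('a \<Rightarrow> 'a \<Rightarrow> real) \<Rightarrow> bool" where
  "bounded_on2 M d \<longleftrightarrow> (\<exists>B. \<forall>x\<in>M. \<forall>y\<in>M. \<bar>d x y\<bar> \<le> B)"

definition PM :: "'a topology \<Rightarrow> ('a \<Rightarrow> 'a \<Rightarrow> real) set" where
  "PM X = {d. pseudometric_on (topspace X) d \<and> bounded_on2 (topspace X) d \<and>
              continuous_map (prod_topology X X) euclideanreal (\<lambda>(x, y). d x y)}"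

definition AM :: "'a topology \<Rightarrow> ('a \<Rightarrow> 'a \<Rightarrow> real) set" where
  "AM X = {d. Metric_space (topspace X) d \<and> Metric_space.mtopology (topspace X) d = X \<and>
              bounded_on2 (topspace X) d}"

end

theory Submission
  imports Defs
begin

theorem proposition3:
  fixes X :: "'a topology"
  assumes "metrizable_space X"
  shows "\<forall>d\<in>PM X. \<forall>\<epsilon>>0. \<exists>\<rho>\<in>AM X.
           \<forall>x\<in>topspace X. \<forall>y\<in>topspace X. \<bar>d x y - \<rho> x y\<bar> \<le> \<epsilon>"
proof (intro ballI allI impI)
  fix d and \<epsilon> :: real
  assume dPM: "d \<in> PM X" and e: "\<epsilon> > 0"
  obtain M m where Mm: "Metric_space M m" and X: "X = Metric_space.mtopology M m"
    using assms unfolding metrizable_space_def by blast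
  define m1 where "m1 = capped_metric 1 (metric (M, m))"
  define c where "c = mdist m1"
  have msp: "mspace m1 = M"
    using Mm by (simp add: m1_def Metric_space.mspace_metric)
  have Xm1: "mtopology_of m1 = X"
    unfolding m1_def mtopology_capped_metric using Mm X
    by (simp add: Metric_space.mtopology_of)
  interpret C: Metric_space M c
    unfolding c_def using Metric_space_mspace_mdist[of m1] msp by simp
  have XC: "X = C.mtopology"
    using Xm1 msp by (simp add: mtopology_of_def c_def)
  have TX: "topspace X = M" using XC by simp
  have c1: "c x y \<le> 1" for x y unfolding c_def m1_def by (rule mdist_capped) simp
  have dpm: "pseudometric_on M d" and dbd: "bounded_on2 M d"
    and dcont: "continuous_map (prod_topology X X) euclideanreal (\<lambda>(x, y). d x y)"
    using dPM TX by (auto simp: PM_def)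
  define \<rho> where "\<rho> = (\<lambda>x y. if x \<in> M \<and> y \<in> M then d x y + \<epsilon> * c x y else 0)"
  have d0: "\<And>x y. x \<in> M \<Longrightarrow> y \<in> M \<Longrightarrow> 0 \<le> d x y"
    and dsym: "\<And>x y. x \<in> M \<Longrightarrow> y \<in> M \<Longrightarrow> d x y = d y x"
    and dtri: "\<And>x y z. x \<in> M \<Longrightarrow> y \<in> M \<Longrightarrow> z \<in> M \<Longrightarrow> d x z \<le> d x y + d y z"
    using dpm unfolding pseudometric_on_def by auto
  interpret R: Metric_space M \<rho>
  proof
    fix x y
    show "0 \<le> \<rho> x y" unfolding \<rho>_def using d0 e by (simp add: C.nonneg)
    show "\<rho> x y = \<rho> y x" unfolding \<rho>_def using dsym C.commute by auto
    assume xy: "x \<in> M" "y \<in> M"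
    have c0: "c x y \<ge> 0" by simp
    have dxx: "d x x = 0" using dpm xy unfolding pseudometric_on_def by auto
    show "(\<rho> x y = 0) = (x = y)"
    proof
      assume h: "\<rho> x y = 0"
      have "0 \<le> \<epsilon> * c x y" using e c0 by simp
      moreover have "d x y + \<epsilon> * c x y = 0" using h xy unfolding \<rho>_def by simp
      ultimately have "\<epsilon> * c x y = 0" using d0[OF xy] by linarith
      then have "c x y = 0" using e by simp
      then show "x = y" using C.zero[OF xy] by simp
    next
      assume "x = y" then show "\<rho> x y = 0" using xy dxx unfolding \<rho>_def by simp
    qed
  next
    fix x y z assume xyz: "x \<in> M" "y \<in> M" "z \<in> M"
    have "c x z \<le> c x y + c y z" using C.triangle xyz by blast
    then have "\<epsilon> * c x z \<le> \<epsilon> * c x y + \<epsilon> * c y z" using e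
      by (metis distrib_left mult_left_mono less_imp_le)
    then show "\<rho> x z \<le> \<rho> x y + \<rho> y z" unfolding \<rho>_def using xyz dtri[OF xyz] by simp
  qed
  have ballRC: "R.mball x (\<epsilon> * r) \<subseteq> C.mball x r" for x r
  proof
    fix y assume "y \<in> R.mball x (\<epsilon> * r)"
    then have xy: "x \<in> M" "y \<in> M" "\<rho> x y < \<epsilon> * r" by auto
    then have "d x y + \<epsilon> * c x y < \<epsilon> * r" unfolding \<rho>_def by simp
    then have "\<epsilon> * c x y < \<epsilon> * r" using d0[OF xy(1,2)] by linarith
    then show "y \<in> C.mball x r" using \<open>x \<in> M\<close> \<open>y \<in> M\<close> e by simp
  qed
  have Ropen: "openin X (R.mball x r)" if "x \<in> M" for x r
  proof -
    have cx: "continuous_map X euclideanreal (\<lambda>y. c x y)"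
      using continuous_on_mdist[of x m1] that msp Xm1 by (simp add: c_def)
    have px: "continuous_map X (prod_topology X X) (\<lambda>y. (x, y))"
      using that TX by (intro continuous_map_pairedI) auto
    have dx: "continuous_map X euclideanreal (\<lambda>y. d x y)"
      using continuous_map_compose[OF px dcont] by (simp add: o_def)
    have f: "continuous_map X euclideanreal (\<lambda>y. d x y + \<epsilon> * c x y)"
      using dx cx by (intro continuous_intros) auto
    have "R.mball x r = {y \<in> topspace X. (\<lambda>y. d x y + \<epsilon> * c x y) y \<in> {..<r}}"
      unfolding R.mball_def TX using that by (auto simp: \<rho>_def)
    then show ?thesis using openin_continuous_map_preimage[OF f, of "{..<r}"] by simp
  qed
  have top: "R.mtopology = X"
    unfolding topology_eq
  proof
    fix S
    show "openin R.mtopology S \<longleftrightarrow> openin X S"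
    proof
      assume "openin R.mtopology S"
      then have S: "S \<subseteq> M" "\<And>x. x \<in> S \<Longrightarrow> \<exists>r>0. R.mball x r \<subseteq> S"
        unfolding R.openin_mtopology by auto
      show "openin X S" unfolding XC C.openin_mtopology
      proof (intro conjI allI impI)
        fix x assume x: "x \<in> S"
        then obtain r where r: "r > 0" "R.mball x r \<subseteq> S" using S by blast
        have "openin C.mtopology (R.mball x r)" using Ropen XC S x by auto
        moreover have "x \<in> R.mball x r" using r S x by auto
        ultimately obtain s where "s > 0" "C.mball x s \<subseteq> R.mball x r"
          unfolding C.openin_mtopology by blast
        then show "\<exists>r>0. C.mball x r \<subseteq> S" using r by blast
      qed (use S in auto)
    next
      assume "openin X S"
      then have S: "S \<subseteq> M" "\<And>x. x \<in> S \<Longrightarrow> \<exists>r>0. C.mball x r \<subseteq> S"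
        unfolding XC C.openin_mtopology by auto
      show "openin R.mtopology S" unfolding R.openin_mtopology
      proof (intro conjI allI impI)
        fix x assume x: "x \<in> S"
        then obtain r where r: "r > 0" "C.mball x r \<subseteq> S" using S by blast
        then show "\<exists>r>0. R.mball x r \<subseteq> S" using ballRC[of x r] e
          by (intro exI[of _ "\<epsilon> * r"]) auto
      qed (use S in auto)
    qed
  qed
  obtain B where B: "\<forall>x\<in>M. \<forall>y\<in>M. \<bar>d x y\<bar> \<le> B" using dbd unfolding bounded_on2_def by blast
  have bd: "bounded_on2 M \<rho>"
    unfolding bounded_on2_def
  proof (intro exI[of _ "B + \<epsilon>"] ballI)
    fix x y assume xy: "x \<in> M" "y \<in> M"
    have "\<epsilon> * c x y \<le> \<epsilon>" using c1[of x y] e by (simp add: mult_left_le)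
    moreover have "0 \<le> \<epsilon> * c x y" using e by simp
    moreover have "\<bar>d x y\<bar> \<le> B" using B xy by blast
    ultimately show "\<bar>\<rho> x y\<bar> \<le> B + \<epsilon>" using xy unfolding \<rho>_def by simp
  qed
  have "\<rho> \<in> AM X" unfolding AM_def using TX top bd R.Metric_space_axioms by simp
  moreover have "\<forall>x\<in>topspace X. \<forall>y\<in>topspace X. \<bar>d x y - \<rho> x y\<bar> \<le> \<epsilon>"
  proof (intro ballI)
    fix x y assume "x \<in> topspace X" "y \<in> topspace X"
    moreover have "\<epsilon> * c x y \<le> \<epsilon>" using c1[of x y] e by (simp add: mult_left_le)
    moreover have "0 \<le> \<epsilon> * c x y" using e by simp
    ultimately show "\<bar>d x y - \<rho> x y\<bar> \<le> \<epsilon>" using TX unfolding \<rho>_def by auto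
  qed
  ultimately show "\<exists>\<rho>\<in>AM X. \<forall>x\<in>topspace X. \<forall>y\<in>topspace X. \<bar>d x y - \<rho> x y\<bar> \<le> \<epsilon>"
    by blast
qed

end
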